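(* Let $p$ be a two-phase solution and let $(x,t)$ be a point where $\nu_1(x,t)>0$. Then $\partial_x\nu_1=\partial_t\nu_1=0$ at $(x,t)$ if and only if either (i) $\mu_1,\mu_2\in\mathbb R$, or (ii) $\mu_2^*=\mu_1$.
   Context: Let $p(x,t)$, $(x,t)\in\mathbb R^2$, be a smooth complex-valued solution of the focusing nonlinear Schrödinger equation $ip_t+p_{xx}+2|p|^2p=0$; $^*$ denotes complex conjugation and subscripts denote partial derivatives. Put $\mathbb U=\begin{pmatrix}-i\lambda& ip\\ ip^*& i\lambda\end{pmatrix}$ and $\mathbb V=\begin{pmatrix}-2i\lambda^2+i|p|^2& 2i\lambda p-p_x\\ 2i\lambda p^*+p^*_x& 2i\lambda^2-i|p|^2\end{pmatrix}$. The solution $p$ is called a two-phase solution if there exist real constants $c_0,c_1,c_2$ such that the matrix $\Psi=\begin{pmatrix}\Psi_{11}&\Psi_{12}\\ \Psi_{21}&-\Psi_{11}\end{pmatrix}$ with $\Psi_{11}=-i\lambda^3-ic_2\lambda^2+(\tfrac12 i|p|^2-ic_1)\lambda+\tfrac14(pp^*_x-p_xp^* )+\tfrac12 ic_2|p|^2-ic_0$, $\Psi_{12}=ip\lambda^2+(-\tfrac12p_x+ic_2p)\lambda-\tfrac14 ip_{xx}-\tfrac12 ip|p|^2-\tfrac12c_2p_x+ic_1p$, $\Psi_{21}=ip^*\lambda^2+(\tfrac12p^*_x+ic_2p^* )\lambda-\tfrac14 ip^*_{xx}-\tfrac12 ip^*|p|^2+\tfrac12c_2p^*_x+ic_1p^*$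 satisfies $\Psi_x=[\mathbb U,\Psi]$ and $\Psi_t=[\mathbb V,\Psi]$ identically in $\lambda\in\mathbb C$. Set $\nu_1=|p|^2$. At points where $p\neq0$ the Dirichlet eigenvalues $\mu_1,\mu_2\in\mathbb C$ are defined (up to order) by $\Psi_{12}(\lambda)=ip(\lambda-\mu_1)(\lambda-\mu_2)$. *)

theory Defs
  imports "HOL-Analysis.Analysis"
begin

definition dx :: "(real \<Rightarrow> real \<Rightarrow> 'a::real_normed_vector) \<Rightarrow> real \<Rightarrow> real \<Rightarrow> 'a" where
  "dx f x t = vector_derivative (\<lambda>s. f s t) (at x)"

definition dt :: "(real \<Rightarrow> real \<Rightarrow> 'a::real_normed_vector) \<Rightarrow> real \<Rightarrow> real \<Rightarrow> 'a" where
  "dt f x t = vector_derivative (\<lambda>s. f x s) (at t)"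

definition iter_partial :: "bool list \<Rightarrow> (real \<Rightarrow> real \<Rightarrow> complex) \<Rightarrow> real \<Rightarrow> real \<Rightarrow> complex" where
  "iter_partial ds f = foldr (\<lambda>b h. if b then dx h else dt h) ds f"

definition smooth2 :: "(real \<Rightarrow> real \<Rightarrow> complex) \<Rightarrow> bool" where
  "smooth2 f \<longleftrightarrow> (\<forall>ds. continuous_on UNIV (\<lambda>z. iter_partial ds f (fst z) (snd z)) \<and>
      (\<forall>x t. (\<lambda>s. iter_partial ds f s t) differentiable (at x) \<and>
             (\<lambda>s. iter_partial ds f x s) differentiable (at t)))"

definition focusing_NLS :: "(real \<Rightarrow> real \<Rightarrow> complex) \<Rightarrow> bool" where
  "focusing_NLS p \<longleftrightarrow> (\<forall>x t. \<i> * dt p x t + dx (dx p) x t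
      + 2 * complex_of_real ((cmod (p x t))\<^sup>2) * p x t = 0)"

text \<open>2x2 complex matrix [[a,b],[c,d]].\<close>
definition mk2 :: "complex \<Rightarrow> complex \<Rightarrow> complex \<Rightarrow> complex \<Rightarrow> complex^2^2" where
  "mk2 a b c d = (\<chi> i j. if i = 1 then (if j = 1 then a else b) else (if j = 1 then c else d))"

definition commut :: "complex^2^2 \<Rightarrow> complex^2^2 \<Rightarrow> complex^2^2" where
  "commut A B = A ** B - B ** A"

definition LaxU :: "(real \<Rightarrow> real \<Rightarrow> complex) \<Rightarrow> complex \<Rightarrow> real \<Rightarrow> real \<Rightarrow> complex^2^2" where
  "LaxU p lam x t = mk2 (-\<i>*lam) (\<i> * p x t) (\<i> * cnj (p x t)) (\<i>*lam)"

definition LaxV :: "(real \<Rightarrow> real \<Rightarrow> complex) \<Rightarrow> complex \<Rightarrow> real \<Rightarrow> real \<Rightarrow> complex^2^2" where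
  "LaxV p lam x t = (let q = p x t; qx = dx p x t; n = complex_of_real ((cmod q)\<^sup>2) in
     mk2 (-2*\<i>*lam^2 + \<i>*n) (2*\<i>*lam*q - qx)
         (2*\<i>*lam*cnj q + cnj qx) (2*\<i>*lam^2 - \<i>*n))"

definition Psi11 :: "(real \<Rightarrow> real \<Rightarrow> complex) \<Rightarrow> real \<Rightarrow> real \<Rightarrow> real \<Rightarrow> complex \<Rightarrow> real \<Rightarrow> real \<Rightarrow> complex" where
  "Psi11 p c0 c1 c2 lam x t = (let q = p x t; qx = dx p x t; n = complex_of_real ((cmod q)\<^sup>2) in
     -\<i>*lam^3 - \<i>* of_real c2*lam^2 + (\<i>*n/2 - \<i>* of_real c1)*lam
     + (q * cnj qx - qx * cnj q)/4 + \<i>* of_real c2*n/2 - \<i>* of_real c0)"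

definition Psi12 :: "(real \<Rightarrow> real \<Rightarrow> complex) \<Rightarrow> real \<Rightarrow> real \<Rightarrow> real \<Rightarrow> complex \<Rightarrow> real \<Rightarrow> real \<Rightarrow> complex" where
  "Psi12 p c0 c1 c2 lam x t = (let q = p x t; qx = dx p x t; qxx = dx (dx p) x t;
       n = complex_of_real ((cmod q)\<^sup>2) in
     \<i>*q*lam^2 + (-qx/2 + \<i>* of_real c2*q)*lam - \<i>*qxx/4 - \<i>*q*n/2
     - of_real c2*qx/2 + \<i>* of_real c1*q)"

definition Psi21 :: "(real \<Rightarrow> real \<Rightarrow> complex) \<Rightarrow> real \<Rightarrow> real \<Rightarrow> real \<Rightarrow> complex \<Rightarrow> real \<Rightarrow> real \<Rightarrow> complex" where
  "Psi21 p c0 c1 c2 lam x t = (let q = cnj (p x t); qx = cnj (dx p x t); qxx = cnj (dx (dx p) x t);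
       n = complex_of_real ((cmod q)\<^sup>2) in
     \<i>*q*lam^2 + (qx/2 + \<i>* of_real c2*q)*lam - \<i>*qxx/4 - \<i>*q*n/2
     + of_real c2*qx/2 + \<i>* of_real c1*q)"

definition Psi :: "(real \<Rightarrow> real \<Rightarrow> complex) \<Rightarrow> real \<Rightarrow> real \<Rightarrow> real \<Rightarrow> complex \<Rightarrow> real \<Rightarrow> real \<Rightarrow> complex^2^2" where
  "Psi p c0 c1 c2 lam x t = mk2 (Psi11 p c0 c1 c2 lam x t) (Psi12 p c0 c1 c2 lam x t)
      (Psi21 p c0 c1 c2 lam x t) (- Psi11 p c0 c1 c2 lam x t)"

definition two_phase :: "(real \<Rightarrow> real \<Rightarrow> complex) \<Rightarrow> bool" where
  "two_phase p \<longleftrightarrow> (\<exists>c0 c1 c2 :: real. \<forall>lam x t.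
      dx (Psi p c0 c1 c2 lam) x t = commut (LaxU p lam x t) (Psi p c0 c1 c2 lam x t) \<and>
      dt (Psi p c0 c1 c2 lam) x t = commut (LaxV p lam x t) (Psi p c0 c1 c2 lam x t))"

end

theory Submission
  imports Defs
begin

lemma L:
  fixes f :: "real \<Rightarrow> complex"
  assumes "f differentiable (at x)"
  shows "deriv (\<lambda>s. (cmod (f s))\<^sup>2) x = 2 * Re (vector_derivative f (at x) * cnj (f x))"
proof -
  define a where "a = vector_derivative f (at x)"
  have fa: "(f has_vector_derivative a) (at x)" using assms a_def vector_derivative_works by blast
  have "((\<lambda>s. f s * cnj (f s)) has_vector_derivative (f x * cnj a + a * cnj (f x))) (at x)"
    using has_vector_derivative_mult[OF fa has_vector_derivative_cnj[OF fa]] by simp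
  then have h: "((\<lambda>s. Re (f s * cnj (f s))) has_vector_derivative Re (f x * cnj a + a * cnj (f x))) (at x)"
    using bounded_linear.has_vector_derivative[OF bounded_linear_Re] by blast
  have e1: "\<And>z. Re (z * cnj z) = (cmod z)\<^sup>2" by (subst complex_norm_square[symmetric]) (simp flip: of_real_power)
  have e2: "Re (f x * cnj a + a * cnj (f x)) = 2 * Re (a * cnj (f x))" by (simp add: algebra_simps)
  have "((\<lambda>s. (cmod (f s))\<^sup>2) has_real_derivative 2 * Re (a * cnj (f x))) (at x)"
    using h unfolding e1 e2 by (simp add: has_real_derivative_iff_has_vector_derivative)
  then show ?thesis unfolding a_def using DERIV_imp_deriv by blast
qed

lemma roots:
  fixes m1 m2 :: complex
  shows "(Im (m1 + m2) = 0 \<and> Im (m1 * m2) = 0) \<longleftrightarrow> ((m1 \<in> \<real> \<and> m2 \<in> \<real>) \<or> cnj m2 = m1)"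
proof
  assume h: "Im (m1 + m2) = 0 \<and> Im (m1 * m2) = 0"
  then have b: "Im m2 = - Im m1" and "Re m1 * Im m2 + Im m1 * Re m2 = 0" by auto
  then have "Im m1 * (Re m2 - Re m1) = 0" by (simp add: algebra_simps)
  then have "Im m1 = 0 \<or> Re m2 = Re m1" by auto
  then show "(m1 \<in> \<real> \<and> m2 \<in> \<real>) \<or> cnj m2 = m1"
    using b by (auto simp: complex_is_Real_iff complex_eq_iff)
next
  assume "(m1 \<in> \<real> \<and> m2 \<in> \<real>) \<or> cnj m2 = m1"
  then show "Im (m1 + m2) = 0 \<and> Im (m1 * m2) = 0"
  proof
    assume "m1 \<in> \<real> \<and> m2 \<in> \<real>" then show ?thesis by (auto simp: complex_is_Real_iff)
  next
    assume "cnj m2 = m1" then have "m1 = cnj m2" by simp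
    then show ?thesis by (simp add: algebra_simps)
  qed
qed

theorem mainTheorem5:
  fixes p :: "real \<Rightarrow> real \<Rightarrow> complex" and c0 c1 c2 x t :: real and mu1 mu2 :: complex
  assumes "smooth2 p" and "focusing_NLS p"
    and "\<forall>lam x t.
      dx (Psi p c0 c1 c2 lam) x t = commut (LaxU p lam x t) (Psi p c0 c1 c2 lam x t) \<and>
      dt (Psi p c0 c1 c2 lam) x t = commut (LaxV p lam x t) (Psi p c0 c1 c2 lam x t)"
    and "(cmod (p x t))\<^sup>2 > 0"
    and "\<forall>lam. Psi12 p c0 c1 c2 lam x t = \<i> * p x t * (lam - mu1) * (lam - mu2)"
  shows "(deriv (\<lambda>s. (cmod (p s t))\<^sup>2) x = 0 \<and> deriv (\<lambda>s. (cmod (p x s))\<^sup>2) t = 0)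
     \<longleftrightarrow> ((mu1 \<in> \<real> \<and> mu2 \<in> \<real>) \<or> cnj mu2 = mu1)"
proof -
  define q where "q = p x t"
  define a where "a = dx p x t"
  define b where "b = dx (dx p) x t"
  define nr where "nr = (cmod q)\<^sup>2"
  define S where "S = mu1 + mu2"
  define P where "P = mu1 * mu2"
  have npos: "nr > 0" using assms(4) q_def nr_def by simp
  have qq: "q * cnj q = of_real nr" unfolding nr_def by (simp add: complex_norm_square[symmetric])
  have sm: "\<forall>x t. (\<lambda>s. p s t) differentiable (at x) \<and> (\<lambda>s. p x s) differentiable (at t)"
    using assms(1) unfolding smooth2_def
    by (metis (no_types) foldr.simps(1) id_apply iter_partial_def)
  have D1: "deriv (\<lambda>s. (cmod (p s t))\<^sup>2) x = 2 * Re (a * cnj q)"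
    using L[of "\<lambda>s. p s t" x] sm unfolding a_def q_def dx_def by simp
  have D2': "deriv (\<lambda>s. (cmod (p x s))\<^sup>2) t = 2 * Re (dt p x t * cnj q)"
    using L[of "\<lambda>s. p x s" t] sm unfolding q_def dt_def by simp
  have nls: "\<i> * dt p x t + b + 2 * of_real nr * q = 0"
    using assms(2) unfolding focusing_NLS_def b_def nr_def q_def by simp
  have dtp: "dt p x t = \<i> * (b + 2 * of_real nr * q)"
  proof -
    have h: "\<i> * dt p x t = - (b + 2 * of_real nr * q)" using nls
      by (subst eq_neg_iff_add_eq_0) (simp add: add.assoc)
    have "dt p x t = - \<i> * (\<i> * dt p x t)" by simp
    also have "\<dots> = \<i> * (b + 2 * of_real nr * q)" unfolding h by (simp add: algebra_simps)
    finally show ?thesis .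
  qed
  have "Re (dt p x t * cnj q) = Re (\<i> * b * cnj q) + Re (\<i> * 2 * of_real nr * (q * cnj q))"
    unfolding dtp by (simp add: algebra_simps)
  also have "\<dots> = - Im (b * cnj q)" unfolding qq by simp
  finally have D2: "deriv (\<lambda>s. (cmod (p x s))\<^sup>2) t = - 2 * Im (b * cnj q)" using D2' by simp
  define B where "B = - a/2 + \<i> * of_real c2 * q"
  define C where "C = - \<i>*b/4 - \<i>*q* of_real nr/2 - of_real c2*a/2 + \<i>* of_real c1*q"
  have ps: "\<And>lam. \<i>*q*lam^2 + B*lam + C = \<i> * q * (lam - mu1) * (lam - mu2)"
    using assms(5) unfolding Psi12_def Let_def B_def C_def q_def a_def b_def nr_def
    by (simp add: algebra_simps)
  have C: "C = \<i> * q * P" using ps[of 0] P_def by simp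
  have e1: "\<i>*q + B + C = \<i> * q * (1 - mu1) * (1 - mu2)" using ps[of 1] by simp
  have e2: "\<i>*q - B + C = \<i> * q * (-1 - mu1) * (-1 - mu2)" using ps[of "-1"] by simp
  have "2 * B = (\<i>*q + B + C) - (\<i>*q - B + C)" by simp
  also have "\<dots> = \<i> * q * (1 - mu1) * (1 - mu2) - \<i> * q * (-1 - mu1) * (-1 - mu2)"
    unfolding e1 e2 ..
  also have "\<dots> = 2 * (- \<i> * q * S)" unfolding S_def by (simp add: algebra_simps)
  finally have Bq: "B = - \<i> * q * S" by simp
  have "B * cnj q = - \<i> * (q * cnj q) * S" unfolding Bq by (simp add: algebra_simps)
  then have "Re (B * cnj q) = nr * Im S" unfolding qq by simp
  moreover have "Re (B * cnj q) = - Re (a * cnj q) / 2"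
    unfolding B_def by (simp add: algebra_simps qq)
  ultimately have IS: "nr * Im S = - Re (a * cnj q) / 2" by simp
  have "C * cnj q = \<i> * (q * cnj q) * P" unfolding C by (simp add: algebra_simps)
  then have "Re (C * cnj q) = - nr * Im P" unfolding qq by simp
  moreover have "Re (C * cnj q) = Im (b * cnj q) / 4 - c2 * Re (a * cnj q) / 2"
  proof -
    define w1 where "w1 = b * cnj q"
    define w2 where "w2 = a * cnj q"
    have "C * cnj q = - \<i>*w1/4 - \<i>*(q * cnj q)* of_real nr/2 - of_real c2*w2/2 + \<i>* of_real c1*(q * cnj q)"
      unfolding C_def w1_def w2_def by (simp add: algebra_simps)
    then have "Re (C * cnj q) = Im w1 / 4 - c2 * Re w2 / 2" unfolding qq by simp
    then show ?thesis unfolding w1_def w2_def .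
  qed
  ultimately have IP: "- nr * Im P = Im (b * cnj q) / 4 - c2 * Re (a * cnj q) / 2" by simp
  have "(deriv (\<lambda>s. (cmod (p s t))\<^sup>2) x = 0 \<and> deriv (\<lambda>s. (cmod (p x s))\<^sup>2) t = 0)
      \<longleftrightarrow> (Re (a * cnj q) = 0 \<and> Im (b * cnj q) = 0)" unfolding D1 D2 by (simp; arith)
  also have "\<dots> \<longleftrightarrow> (Im S = 0 \<and> Im P = 0)"
  proof -
    have r1: "Re (a * cnj q) = -2 * (nr * Im S)" using IS by linarith
    have "- nr * Im P = - (nr * Im P)" by simp
    then have r2: "Im (b * cnj q) = 2 * c2 * Re (a * cnj q) - 4 * (nr * Im P)" using IP by linarith
    show ?thesis unfolding r2 unfolding r1 using npos by auto
  qed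
  also have "\<dots> \<longleftrightarrow> ((mu1 \<in> \<real> \<and> mu2 \<in> \<real>) \<or> cnj mu2 = mu1)"
    unfolding S_def P_def by (rule roots)
  finally show ?thesis .
qed

end
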